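(* Let $a_n$, $s$ and $c$ be any integers and let $n$ be a positive integer. Then \[ \sum_{a_{n-1}=c}^{a_n}\sum_{a_{n-2}=c}^{a_{n-1}}\cdots\sum_{a_0=c}^{a_1}(-1)^{a_0}F_{3a_0+s}=(-1)^{a_n}\frac{F_{n+3a_n+s}}{2^n}+(-1)^c\sum_{j=0}^{n-1}\frac{F_{n-j+3(c-1)+s}}{2^{n-j}}\binom{a_n+j-c}{j}, \] and \[ \sum_{a_{n-1}=c}^{a_n}\sum_{a_{n-2}=c}^{a_{n-1}}\cdots\sum_{a_0=c}^{a_1}(-1)^{a_0}L_{3a_0+s}=(-1)^{a_n}\frac{L_{n+3a_n+s}}{2^n}+(-1)^c\sum_{j=0}^{n-1}\frac{L_{n-j+3(c-1)+s}}{2^{n-j}}\binom{a_n+j-c}{j}. \]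
   Context: $F_j$ and $L_j$ are the Fibonacci and Lucas numbers: $F_0=0,F_1=1$, $L_0=2,L_1=1$, both satisfying $X_j=X_{j-1}+X_{j-2}$, extended to all integer indices via the recurrence. For integers $c,m$ and a function $f$ on the integers, $\sum_{k=c}^m f(k)$ denotes the usual sum if $m\ge c$, equals $0$ if $m=c-1$, and equals $-\sum_{k=m+1}^{c-1}f(k)$ if $m\le c-2$. The nested sum $\sum_{a_{n-1}=c}^{a_n}\cdots\sum_{a_0=c}^{a_1}g(a_0)$ is the iterated sum with $n$ summation signs: innermost over $a_0$ from $c$ to $a_1$, then $a_1$ from $c$ to $a_2$, ..., outermost $a_{n-1}$ from $c$ to $a_n$. For an integer $j\ge0$ and any number $y$, $\binom{y}{j}=y(y-1)\cdots(y-j+1)/j!$. *)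

theory Defs
  imports Complex_Main
begin

fun fibn :: "nat \<Rightarrow> int" where
  "fibn 0 = 0" | "fibn (Suc 0) = 1" | "fibn (Suc (Suc n)) = fibn (Suc n) + fibn n"

fun lucn :: "nat \<Rightarrow> int" where
  "lucn 0 = 2" | "lucn (Suc 0) = 1" | "lucn (Suc (Suc n)) = lucn (Suc n) + lucn n"

text \<open>Extension to all integers via the recurrence X_{j-2} = X_j - X_{j-1}:
  F_{-k} = (-1)^(k+1) F_k and L_{-k} = (-1)^k L_k.\<close>
definition F :: "int \<Rightarrow> int" where
  "F j = (if j \<ge> 0 then fibn (nat j) else (-1) ^ (nat (-j) + 1) * fibn (nat (-j)))"

definition L :: "int \<Rightarrow> int" where
  "L j = (if j \<ge> 0 then lucn (nat j) else (-1) ^ (nat (-j)) * lucn (nat (-j)))"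

definition gsum :: "int \<Rightarrow> int \<Rightarrow> (int \<Rightarrow> real) \<Rightarrow> real" where
  "gsum c m f = (if m \<ge> c then (\<Sum>k\<in>{c..m}. f k) else - (\<Sum>k\<in>{m+1..c-1}. f k))"

fun nsum :: "nat \<Rightarrow> int \<Rightarrow> (int \<Rightarrow> real) \<Rightarrow> int \<Rightarrow> real" where
  "nsum 0 c g x = g x"
| "nsum (Suc n) c g x = gsum c x (\<lambda>a. nsum n c g a)"

end

theory Submission
  imports Defs
begin


lemma F_rec: "F (j+2) = F (j+1) + F j"
proof (cases "j \<ge> 0")
  case True
  then have "nat (j+2) = Suc (Suc (nat j))" "nat (j+1) = Suc (nat j)" by auto
  then show ?thesis using True by (simp add: F_def)
next
  case False
  show ?thesis
  proof (cases "j = -1")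
    case True then show ?thesis by (simp add: F_def)
  next
    case False
    with \<open>\<not> j \<ge> 0\<close> obtain m :: nat where m: "j = - int m - 2" proof -
      assume h: "\<And>m. j = - int m - 2 \<Longrightarrow> thesis"
      show thesis by (rule h[of "nat (-j-2)"]) (use \<open>\<not> j \<ge> 0\<close> False in auto)
    qed
    have a: "nat (- j) = Suc (Suc m)" "nat (-(j+1)) = Suc m" using m by auto
    show ?thesis
    proof (cases "m = 0")
      case True then show ?thesis using m by (simp add: F_def numeral_2_eq_2)
    next
      case False
      then have "\<not> (j + 2 \<ge> 0)" using m by auto
      moreover have "nat (-(j+2)) = m" using m by auto
      ultimately show ?thesis using m a by (simp add: F_def algebra_simps)
    qed
  qed
qed

lemma L_rec: "L (j+2) = L (j+1) + L j"
proof (cases "j \<ge> 0")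
  case True
  then have "nat (j+2) = Suc (Suc (nat j))" "nat (j+1) = Suc (nat j)" by auto
  then show ?thesis using True by (simp add: L_def)
next
  case False
  show ?thesis
  proof (cases "j = -1")
    case True then show ?thesis by (simp add: L_def)
  next
    case False
    with \<open>\<not> j \<ge> 0\<close> obtain m :: nat where m: "j = - int m - 2" proof -
      assume h: "\<And>m. j = - int m - 2 \<Longrightarrow> thesis"
      show thesis by (rule h[of "nat (-j-2)"]) (use \<open>\<not> j \<ge> 0\<close> False in auto)
    qed
    have a: "nat (- j) = Suc (Suc m)" "nat (-(j+1)) = Suc m" using m by auto
    show ?thesis
    proof (cases "m = 0")
      case True then show ?thesis using m by (simp add: L_def numeral_2_eq_2)
    next
      case False
      then have "\<not> (j + 2 \<ge> 0)" using m by auto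
      moreover have "nat (-(j+2)) = m" using m by auto
      ultimately show ?thesis using m a by (simp add: L_def algebra_simps)
    qed
  qed
qed

lemma gsum_base: "gsum c (c-1) f = 0"
  by (simp add: gsum_def)

lemma gsum_step: "gsum c x f - gsum c (x-1) f = f x"
proof (cases "x \<ge> c")
  case True
  have "{c..x} = insert x {c..x-1}" using True by auto
  then have s: "sum f {c..x} = f x + sum f {c..x-1}" by simp
  show ?thesis
  proof (cases "x - 1 \<ge> c")
    case True then show ?thesis using s \<open>x \<ge> c\<close> by (simp add: gsum_def)
  next
    case False then have "x = c" using \<open>x \<ge> c\<close> by auto
    then show ?thesis by (simp add: gsum_def)
  qed
next
  case False
  have "{x..c-1} = insert x {x+1..c-1}" using False by auto
  then have s: "sum f {x..c-1} = f x + sum f {x+1..c-1}" by simp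
  show ?thesis using False s by (simp add: gsum_def)
qed

lemma gsum_unique:
  assumes "S (c-1) = 0" and "\<And>x. S x - S (x-1) = f x"
  shows "S x = gsum c x f"
proof -
  define D where "D x = S x - gsum c x f" for x
  have D0: "D (c-1) = 0" using assms(1) gsum_base by (simp add: D_def)
  have Ds: "D x = D (x-1)" for x using assms(2)[of x] gsum_step[of c x f] by (simp add: D_def)
  have "D x = 0"
  proof (induct x rule: int_induct[where k="c-1"])
    case base then show ?case by (rule D0)
  next
    case (step1 i) then show ?case using Ds[of "i+1"] by simp
  next
    case (step2 i) then show ?case using Ds[of i] by simp
  qed
  then show ?thesis by (simp add: D_def)
qed


definition R :: "(int \<Rightarrow> int) \<Rightarrow> int \<Rightarrow> int \<Rightarrow> nat \<Rightarrow> int \<Rightarrow> real" where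
  "R G s c n x = (-1) powi x * of_int (G (int n + 3 * x + s)) / 2 ^ n
     + (-1) powi c * (\<Sum>j<n. of_int (G (int n - int j + 3 * (c - 1) + s)) / 2 ^ (n - j)
                 * (real_of_int (x + int j - c) gchoose j))"

lemma powi_m1: "(-1::real) powi (x - 1) = - ((-1) powi x)"
  by (simp add: power_int_diff)

lemma R_base: "R G s c (Suc n) (c - 1) = 0"
proof -
  have z: "(real_of_int (c - 1 + int (Suc j) - c) gchoose (Suc j)) = 0" for j
  proof -
    have "real_of_int (c - 1 + int (Suc j) - c) = of_nat j" by simp
    then show ?thesis by (simp add: binomial_gbinomial[symmetric])
  qed
  have "(\<Sum>j<Suc n. of_int (G (int (Suc n) - int j + 3 * (c - 1) + s)) / 2 ^ (Suc n - j)
                 * (real_of_int (c - 1 + int j - c) gchoose j))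
       = of_int (G (int (Suc n) + 3 * (c - 1) + s)) / 2 ^ (Suc n)"
    by (simp only: sum.lessThan_Suc_shift z) simp
  then show ?thesis unfolding R_def
    by (simp add: powi_m1 algebra_simps)
qed

lemma R_step:
  assumes rec: "\<And>j. G (j+2) = G (j+1) + G j"
  shows "R G s c (Suc n) x - R G s c (Suc n) (x - 1) = R G s c n x"
proof -
  define k where "k = int n + 3 * x + s"
  have g1: "G (int (Suc n) + 3 * x + s) + G (int (Suc n) + 3 * (x - 1) + s) = 2 * G k"
    using rec[of "k - 1"] rec[of "k - 2"] by (simp add: k_def algebra_simps)
  have t1: "(-1) powi x * of_int (G (int (Suc n) + 3 * x + s)) / 2 ^ Suc n
      - (-1) powi (x - 1) * of_int (G (int (Suc n) + 3 * (x - 1) + s)) / 2 ^ Suc n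
      = (-1::real) powi x * of_int (G k) / 2 ^ n"
  proof -
    have "(-1) powi x * of_int (G (int (Suc n) + 3 * x + s)) / 2 ^ Suc n
      - (-1) powi (x - 1) * of_int (G (int (Suc n) + 3 * (x - 1) + s)) / 2 ^ Suc n
      = (-1::real) powi x * of_int (G (int (Suc n) + 3 * x + s) + G (int (Suc n) + 3 * (x - 1) + s)) / 2 ^ Suc n"
      by (simp add: powi_m1 field_simps)
    also have "\<dots> = (-1::real) powi x * of_int (2 * G k) / 2 ^ Suc n" by (simp only: g1)
    also have "\<dots> = (-1::real) powi x * of_int (G k) / 2 ^ n" by simp
    finally show ?thesis .
  qed
  have b: "(real_of_int (x + int (Suc j) - c) gchoose (Suc j)) - (real_of_int (x - 1 + int (Suc j) - c) gchoose (Suc j))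
      = (real_of_int (x + int j - c) gchoose j)" for j
  proof -
    have "real_of_int (x + int (Suc j) - c) = real_of_int (x + int j - c) + 1"
      "real_of_int (x - 1 + int (Suc j) - c) = real_of_int (x + int j - c)" by simp_all
    then show ?thesis by (simp only: gbinomial_Suc_Suc)
  qed
  define a where "a j = of_int (G (int n - int j + 3 * (c - 1) + s)) / (2::real) ^ (n - j)" for j
  have a': "of_int (G (int (Suc n) - int (Suc j) + 3 * (c - 1) + s)) / (2::real) ^ (Suc n - Suc j) = a j" for j
    by (simp add: a_def)
  have s: "(\<Sum>j<Suc n. of_int (G (int (Suc n) - int j + 3 * (c - 1) + s)) / 2 ^ (Suc n - j)
                 * (real_of_int (x + int j - c) gchoose j))
         - (\<Sum>j<Suc n. of_int (G (int (Suc n) - int j + 3 * (c - 1) + s)) / 2 ^ (Suc n - j)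
                 * (real_of_int (x - 1 + int j - c) gchoose j))
         = (\<Sum>j<n. a j * (real_of_int (x + int j - c) gchoose j))"
    apply (simp only: sum.lessThan_Suc_shift a')
    apply (simp only: add_diff_add sum_subtractf[symmetric] right_diff_distrib[symmetric] b)
    apply simp
    done
  show ?thesis unfolding R_def
    using t1 s by (simp add: a_def k_def right_diff_distrib[symmetric] algebra_simps)
qed

lemma main:
  assumes rec: "\<And>j. G (j+2) = G (j+1) + G j"
  shows "nsum n c (\<lambda>a. (-1) powi a * of_int (G (3 * a + s))) x = R G s c n x"
proof (induct n arbitrary: x)
  case 0 then show ?case by (simp add: R_def)
next
  case (Suc n)
  have "R G s c (Suc n) x = gsum c x (\<lambda>a. nsum n c (\<lambda>a. (-1) powi a * of_int (G (3 * a + s))) a)"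
    by (rule gsum_unique) (use R_base R_step[OF rec] Suc in auto)
  then show ?case by simp
qed



theorem theorem2:
  fixes an s c :: int and n :: nat
  assumes "n > 0"
  shows "(nsum n c (\<lambda>a. (-1) powi a * of_int (F (3 * a + s))) an
           = (-1) powi an * of_int (F (int n + 3 * an + s)) / 2 ^ n
             + (-1) powi c * (\<Sum>j = 0..n-1. of_int (F (int n - int j + 3 * (c - 1) + s)) / 2 ^ (n - j)
                 * (real_of_int (an + int j - c) gchoose j))) \<and>
         (nsum n c (\<lambda>a. (-1) powi a * of_int (L (3 * a + s))) an
           = (-1) powi an * of_int (L (int n + 3 * an + s)) / 2 ^ n
             + (-1) powi c * (\<Sum>j = 0..n-1. of_int (L (int n - int j + 3 * (c - 1) + s)) / 2 ^ (n - j)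
                 * (real_of_int (an + int j - c) gchoose j)))"
  proof -
  have e: "{0..n-1} = {..<n}" using assms by auto
  show ?thesis
    unfolding e using main[OF F_rec, of n c s an] main[OF L_rec, of n c s an]
    by (simp add: R_def)
qed

end
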